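(* Let $(\alpha_0,\beta_0)\in U$ with $K(\alpha_0,\beta_0)\in\mathfrak M_\infty$, and let $(\alpha_n,\beta_n)\in U$ with $(\alpha_n,\beta_n)\to(\alpha_0,\beta_0)$, $\mathcal P_n=\{[0,\alpha_n],[\alpha_n,1]\}$ for $n=0,1,\dots$. Then for every $m\ge1$ there is $\delta_m>0$ such that for every $n$ every interval of $\mathcal P_n^{(m)}=\bigvee_{j=0}^{m-1}T^{-j}_{\alpha_n,\beta_n}(\mathcal P_n)$ has Lebesgue measure at least $\delta_m$.
   Context: For $0<\alpha<1$ and $0\le\beta\le1$ the skew tent map is $T_{\alpha,\beta}(x)=\frac{\beta}{\alpha}x$ for $0\le x\le\alpha$ and $T_{\alpha,\beta}(x)=\frac{\beta}{1-\alpha}(1-x)$ for $\alpha<x\le1$. $U=\{(\alpha,\beta): \tfrac12<\beta\le1,\ 1-\beta<\alpha<\beta\}$. The kneading sequence $K(\alpha,\beta)$ is built from the symbols $\mathfrak m_n=L,C,R$ according as $T^n_{\alpha,\beta}(\alpha)<\alpha$, $=\alpha$, $>\alpha$, truncated at the first $C$ if there is one; $\mathfrak M_\infty$ is the set of kneading sequences containing no $C$, i.e. those with $T^k_{\alpha,\beta}(\alpha)\ne\alpha$ for all $k\ge1$. The partition $\mathcal P_n^{(m)}$ consists of the nondegenerate closed intervals into which $[0,1]$ is cut by the points $0,1$ and all points of $T^{-j}_{\alpha_n,\beta_n}(\alpha_n)$, $0\le j\le m-1$. *)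

theory Defs
  imports "HOL-Analysis.Analysis"
begin

definition skew_tent :: "real \<Rightarrow> real \<Rightarrow> real \<Rightarrow> real" where
  "skew_tent \<alpha> \<beta> x = (if x \<le> \<alpha> then (\<beta> / \<alpha>) * x else (\<beta> / (1 - \<alpha>)) * (1 - x))"

definition U_region :: "(real \<times> real) set" where
  "U_region = {(\<alpha>, \<beta>). 1/2 < \<beta> \<and> \<beta> \<le> 1 \<and> 1 - \<beta> < \<alpha> \<and> \<alpha> < \<beta>}"

datatype kneading_symbol = L | C | R

definition kneading_sym :: "real \<Rightarrow> real \<Rightarrow> nat \<Rightarrow> kneading_symbol" where
  "kneading_sym \<alpha> \<beta> n =
     (let y = (skew_tent \<alpha> \<beta> ^^ n) \<alpha> in if y < \<alpha> then L else if y = \<alpha> then C else R)"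

definition kneading_in_M_infty :: "real \<Rightarrow> real \<Rightarrow> bool" where
  "kneading_in_M_infty \<alpha> \<beta> \<longleftrightarrow> (\<forall>n\<ge>1. kneading_sym \<alpha> \<beta> n \<noteq> C)"

definition cut_points :: "real \<Rightarrow> real \<Rightarrow> nat \<Rightarrow> real set" where
  "cut_points \<alpha> \<beta> m = {0, 1} \<union>
     {x \<in> {0..1}. \<exists>j<m. (skew_tent \<alpha> \<beta> ^^ j) x = \<alpha>}"

definition refined_partition :: "real \<Rightarrow> real \<Rightarrow> nat \<Rightarrow> real set set" where
  "refined_partition \<alpha> \<beta> m =
     {{a..b} | a b. a < b \<and> a \<in> cut_points \<alpha> \<beta> m \<and> b \<in> cut_points \<alpha> \<beta> m
                   \<and> cut_points \<alpha> \<beta> m \<inter> {a<..<b} = {}}"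

end

theory Submission
  imports Defs
begin

lemma tent_min:
  fixes a b x :: real
  assumes "0 < a" "a < 1" "0 \<le> b"
  shows "skew_tent a b x = min (b/a*x) (b/(1-a)*(1-x))"
proof (cases "x \<le> a")
  case True
  have h: "b*x \<le> b*a" using True assms by (simp add: mult_left_mono)
  have "b*x*(1-a) \<le> b*(1-x)*a" using h by (simp add: algebra_simps)
  hence "b/a*x \<le> b/(1-a)*(1-x)" using assms by (simp add: field_simps)
  then show ?thesis using True by (simp add: skew_tent_def)
next
  case False
  have h: "b*a \<le> b*x" using False assms by (simp add: mult_left_mono)
  have "b*(1-x)*a \<le> b*x*(1-a)" using h by (simp add: algebra_simps)
  hence "b/(1-a)*(1-x) \<le> b/a*x" using assms by (simp add: field_simps)
  then show ?thesis using False by (simp add: skew_tent_def)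
qed

lemma tent_cont: "0 < a \<Longrightarrow> a < 1 \<Longrightarrow> 0 \<le> (b::real) \<Longrightarrow> continuous_on S (skew_tent a b)"
  by (simp add: tent_min continuous_intros)

lemma tent_range:
  fixes a b x :: real
  assumes "0 < a" "a < 1" "0 \<le> b" "b \<le> 1" "0 \<le> x" "x \<le> 1"
  shows "0 \<le> skew_tent a b x \<and> skew_tent a b x \<le> b"
proof (cases "x \<le> a")
  case True
  have "b*x \<le> b*a" using True assms by (simp add: mult_left_mono)
  then show ?thesis using True assms by (simp add: skew_tent_def field_simps)
next
  case False
  have "b*(1-x) \<le> b*(1-a)" using False assms by (simp add: mult_left_mono)
  hence "b*(1-x)/(1-a) \<le> b*(1-a)/(1-a)" using assms by (intro divide_right_mono) auto
  hence "b*(1-x)/(1-a) \<le> b" using assms by simp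
  moreover have "0 \<le> b*(1-x)/(1-a)" using assms by simp
  ultimately show ?thesis using False assms by (simp add: skew_tent_def)
qed

lemma tent_seg:
  fixes a b x y L :: real
  assumes "0 < a" "a < 1" "0 \<le> b" "b/a \<le> L" "b/(1-a) \<le> L" "x \<le> y" "(x \<le> a \<and> y \<le> a) \<or> (a \<le> x \<and> a \<le> y)"
  shows "\<bar>skew_tent a b x - skew_tent a b y\<bar> \<le> L * (y - x)"
  using assms(7)
proof
  assume h: "x \<le> a \<and> y \<le> a"
  hence "skew_tent a b y - skew_tent a b x = b/a * (y - x)" by (simp add: skew_tent_def right_diff_distrib)
  moreover have "b/a * (y-x) \<le> L * (y - x)" using assms by (intro mult_right_mono) auto
  moreover have "0 \<le> b/a * (y-x)" using assms by simp
  ultimately show ?thesis by linarith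
next
  assume h: "a \<le> x \<and> a \<le> y"
  have e: "skew_tent a b z = b/(1-a) * (1 - z)" if "a \<le> z" for z
    using that assms by (cases "z = a") (auto simp: skew_tent_def field_simps)
  hence "skew_tent a b x - skew_tent a b y = b/(1-a) * (y - x)" using h by (simp add: right_diff_distrib)
  moreover have "b/(1-a) * (y-x) \<le> L * (y - x)" using assms by (intro mult_right_mono) auto
  moreover have "0 \<le> b/(1-a) * (y-x)" using assms by simp
  ultimately show ?thesis by linarith
qed

lemma tent_lip:
  fixes a b x y L :: real
  assumes "0 < a" "a < 1" "0 \<le> b" "b/a \<le> L" "b/(1-a) \<le> L"
  shows "\<bar>skew_tent a b x - skew_tent a b y\<bar> \<le> L * \<bar>x - y\<bar>"
proof -
  have main: "\<bar>skew_tent a b x - skew_tent a b y\<bar> \<le> L * (y - x)" if "x \<le> y" for x y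
  proof (cases "y \<le> a \<or> a \<le> x")
    case True
    have "(x \<le> a \<and> y \<le> a) \<or> (a \<le> x \<and> a \<le> y)" using True that by auto
    then show ?thesis using tent_seg[OF assms that] by blast
  next
    case False
    have 1: "\<bar>skew_tent a b x - skew_tent a b a\<bar> \<le> L * (a - x)"
      using tent_seg[OF assms, of x a] False by auto
    have 2: "\<bar>skew_tent a b a - skew_tent a b y\<bar> \<le> L * (y - a)"
      using tent_seg[OF assms, of a y] False by auto
    show ?thesis using 1 2 by (simp add: algebra_simps)
  qed
  show ?thesis
  proof (cases "x \<le> y")
    case True then show ?thesis using main[OF True] by simp
  next
    case False then show ?thesis using main[of y x] by (simp add: abs_minus_commute)
  qed
qed

lemma tent_iter_lip:
  fixes a b x y L :: real
  assumes "0 < a" "a < 1" "0 \<le> b" "b/a \<le> L" "b/(1-a) \<le> L"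
  shows "\<bar>(skew_tent a b ^^ j) x - (skew_tent a b ^^ j) y\<bar> \<le> L^j * \<bar>x - y\<bar>"
proof (induction j)
  case 0 then show ?case by simp
next
  case (Suc j)
  have L0: "0 \<le> L" using assms by (smt (verit) divide_nonneg_pos)
  have "\<bar>(skew_tent a b ^^ Suc j) x - (skew_tent a b ^^ Suc j) y\<bar>
     \<le> L * \<bar>(skew_tent a b ^^ j) x - (skew_tent a b ^^ j) y\<bar>"
    using tent_lip[OF assms] by simp
  also have "\<dots> \<le> L * (L^j * \<bar>x - y\<bar>)" using Suc L0 by (simp add: mult_left_mono)
  finally show ?case by (simp add: mult.assoc)
qed

lemma tent_inj_half:
  fixes a b x y :: real
  assumes "0 < a" "a < 1" "0 < b" "x < y" "skew_tent a b x = skew_tent a b y"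
  shows "x < a \<and> a < y"
proof (rule ccontr)
  assume "\<not> (x < a \<and> a < y)"
  hence "y \<le> a \<or> a \<le> x" by auto
  thus False
  proof
    assume "y \<le> a"
    hence "b/a*x = b/a*y" using assms by (simp add: skew_tent_def)
    thus False using assms by simp
  next
    assume h: "a \<le> x"
    have e: "skew_tent a b z = b/(1-a) * (1 - z)" if "a \<le> z" for z
      using that assms by (cases "z = a") (auto simp: skew_tent_def field_simps)
    have "b/(1-a)*(1-x) = b/(1-a)*(1-y)" using e[of x] e[of y] h assms by simp
    thus False using assms by simp
  qed
qed

lemma collapse:
  fixes a b :: real
  assumes "0 < a" "a < 1" "0 < b" "b \<le> 1"
  shows "x < y \<Longrightarrow> x \<in> {0..1} \<Longrightarrow> y \<in> {0..1} \<Longrightarrow> (skew_tent a b ^^ j) x = (skew_tent a b ^^ j) y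
    \<Longrightarrow> \<exists>z\<in>{x<..<y}. \<exists>i<j. (skew_tent a b ^^ i) z = a"
proof (induction j arbitrary: x y)
  case 0 then show ?case by simp
next
  case (Suc j)
  let ?T = "skew_tent a b"
  have eq: "(?T ^^ j) (?T x) = (?T ^^ j) (?T y)" using Suc.prems(4) unfolding funpow_Suc_right comp_def .
  have tr: "?T u \<in> {0..1}" if "u \<in> {0..1}" for u
    using tent_range[OF assms(1,2) _ assms(4), of u] assms(3,4) that by auto
  have rx: "?T x \<in> {0..1}" using tr Suc.prems(2) .
  have ry: "?T y \<in> {0..1}" using tr Suc.prems(3) .
  have cont: "continuous_on {x..y} ?T" using tent_cont assms by simp
  have step: "\<exists>z\<in>{x<..<y}. \<exists>i<Suc j. (?T ^^ i) z = a"
    if w: "w \<in> {?T x<..<?T y} \<or> w \<in> {?T y<..<?T x}" and i: "i < j" "(?T ^^ i) w = a" for w i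
  proof -
    have "\<exists>z\<ge>x. z \<le> y \<and> ?T z = w"
      using w
    proof
      assume "w \<in> {?T x<..<?T y}"
      then show ?thesis using IVT'[of ?T x w y] cont Suc.prems(1) by auto
    next
      assume "w \<in> {?T y<..<?T x}"
      then show ?thesis using IVT2'[of ?T y w x] cont Suc.prems(1) by auto
    qed
    then obtain z where z: "x \<le> z" "z \<le> y" "?T z = w" by blast
    have "z \<noteq> x" "z \<noteq> y" using z w by auto
    hence "z \<in> {x<..<y}" using z by auto
    moreover have "(?T ^^ Suc i) z = a" unfolding funpow_Suc_right comp_def using z i by simp
    ultimately show ?thesis using i by blast
  qed
  consider "?T x = ?T y" | "?T x < ?T y" | "?T y < ?T x" by linarith
  then show ?case
  proof cases
    case 1
    have "x < a \<and> a < y" using tent_inj_half[OF assms(1,2,3) Suc.prems(1) 1] .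
    moreover have "(?T ^^ 0) a = a" by simp
    ultimately show ?thesis by force
  next
    case 2
    obtain w i where "w \<in> {?T x<..<?T y}" "i < j" "(?T ^^ i) w = a"
      using Suc.IH[OF 2 rx ry eq] by blast
    then show ?thesis using step by blast
  next
    case 3
    obtain w i where "w \<in> {?T y<..<?T x}" "i < j" "(?T ^^ i) w = a"
      using Suc.IH[OF 3 ry rx eq[symmetric]] by blast
    then show ?thesis using step by blast
  qed
qed

lemma preimage_finite:
  fixes a b c :: real
  assumes "0 < a" "a < 1" "0 < b"
  shows "finite {x. (skew_tent a b ^^ j) x = c}"
proof (induction j)
  case 0 then show ?case by simp
next
  case (Suc j)
  let ?S = "{y. (skew_tent a b ^^ j) y = c}"
  have "{x. (skew_tent a b ^^ Suc j) x = c} \<subseteq> (\<lambda>y. a*y/b) ` ?S \<union> (\<lambda>y. 1-(1-a)*y/b) ` ?S"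
  proof
    fix x assume "x \<in> {x. (skew_tent a b ^^ Suc j) x = c}"
    hence hx: "skew_tent a b x \<in> ?S" unfolding funpow_Suc_right comp_def by simp
    show "x \<in> (\<lambda>y. a*y/b) ` ?S \<union> (\<lambda>y. 1-(1-a)*y/b) ` ?S"
    proof (cases "x \<le> a")
      case True
      hence "x = a * skew_tent a b x / b" using assms by (simp add: skew_tent_def)
      thus ?thesis using hx by blast
    next
      case False
      hence "x = 1 - (1-a) * skew_tent a b x / b" using assms by (simp add: skew_tent_def)
      thus ?thesis using hx by blast
    qed
  qed
  moreover have "finite ((\<lambda>y. a*y/b) ` ?S \<union> (\<lambda>y. 1-(1-a)*y/b) ` ?S)" using Suc by simp
  ultimately show ?case by (rule finite_subset)
qed

lemma cut_points_finite:
  fixes a b :: real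
  assumes "0 < a" "a < 1" "0 < b"
  shows "finite (cut_points a b m)"
proof -
  have "cut_points a b m \<subseteq> {0,1} \<union> (\<Union>j<m. {x. (skew_tent a b ^^ j) x = a})"
    unfolding cut_points_def by auto
  moreover have "finite ({0,1} \<union> (\<Union>j<m. {x. (skew_tent a b ^^ j) x = a}))"
    using preimage_finite[OF assms] by simp
  ultimately show ?thesis by (rule finite_subset)
qed

lemma pos_each:
  fixes a b :: real
  assumes "0 < a" "a < 1" "0 < b"
  shows "\<exists>\<delta>>0. \<forall>I\<in>refined_partition a b m. \<delta> \<le> measure lborel I"
proof -
  let ?F = "cut_points a b m"
  let ?S = "(\<lambda>(p,q). q - p) ` {(p,q). p \<in> ?F \<and> q \<in> ?F \<and> p < q}"
  have fin: "finite ?F" using cut_points_finite[OF assms] .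
  have "{(p,q). p \<in> ?F \<and> q \<in> ?F \<and> p < q} \<subseteq> ?F \<times> ?F" by auto
  hence "finite {(p,q). p \<in> ?F \<and> q \<in> ?F \<and> p < q}" using fin by (meson finite_SigmaI finite_subset)
  hence finS: "finite ?S" by simp
  have "(0::real, 1::real) \<in> {(p,q). p \<in> ?F \<and> q \<in> ?F \<and> p < q}" unfolding cut_points_def by auto
  hence neS: "?S \<noteq> {}" by blast
  have posS: "\<forall>s\<in>?S. 0 < s" by auto
  have "0 < Min ?S" using finS neS posS by auto
  moreover have "\<forall>I\<in>refined_partition a b m. Min ?S \<le> measure lborel I"
  proof
    fix I assume "I \<in> refined_partition a b m"
    then obtain p q where I: "I = {p..q}" "p < q" "p \<in> ?F" "q \<in> ?F"
      unfolding refined_partition_def by blast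
    hence "q - p \<in> ?S" by force
    hence "Min ?S \<le> q - p" using finS by simp
    thus "Min ?S \<le> measure lborel I" using I by simp
  qed
  ultimately show ?thesis by blast
qed

lemma iter0: "0 < (a::real) \<Longrightarrow> (skew_tent a b ^^ j) 0 = 0"
  by (induction j) (auto simp: skew_tent_def)

lemma iter1: "0 < (a::real) \<Longrightarrow> a < 1 \<Longrightarrow> (skew_tent a b ^^ Suc j) 1 = 0"
proof -
  assume "0 < a" "a < 1"
  hence "skew_tent a b 1 = 0" by (simp add: skew_tent_def)
  thus ?thesis using iter0[OF \<open>0 < a\<close>] unfolding funpow_Suc_right comp_def by simp
qed

lemma iter_shift:
  assumes "(f ^^ k) x = y" "k \<le> j"
  shows "(f ^^ j) x = (f ^^ (j - k)) y"
proof -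
  have "(f ^^ j) x = (f ^^ (j-k)) ((f ^^ k) x)" using assms(2)
    by (metis funpow_add le_add_diff_inverse2 comp_apply)
  thus ?thesis using assms(1) by simp
qed

lemma gap:
  fixes a b L D :: real
  assumes a0: "0 < a" and a1: "a < 1" and b0: "0 < b" and b1: "b \<le> 1"
    and L1: "b/a \<le> L" and L2: "b/(1-a) \<le> L" and L3: "1 \<le> L"
    and D0: "0 < D" and Da: "D \<le> a" and Da': "D \<le> 1 - a"
    and Dk: "\<forall>i\<in>{1..<m}. D \<le> \<bar>(skew_tent a b ^^ i) a - a\<bar>"
    and m1: "1 \<le> m"
    and I: "I \<in> refined_partition a b m"
  shows "D / L^m \<le> measure lborel I"
proof -
  let ?T = "skew_tent a b"
  let ?F = "cut_points a b m"
  obtain p q where pq: "I = {p..q}" "p < q" "p \<in> ?F" "q \<in> ?F" and gapF: "?F \<inter> {p<..<q} = {}"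
    using I unfolding refined_partition_def by blast
  have F01: "x \<in> ?F \<Longrightarrow> 0 \<le> x \<and> x \<le> 1" for x unfolding cut_points_def by auto
  have Fpre: "x \<in> ?F \<Longrightarrow> x = 0 \<or> x = 1 \<or> (\<exists>k<m. (?T ^^ k) x = a)" for x
    unfolding cut_points_def by auto
  have p01: "0 \<le> p" "p \<le> 1" and q01: "0 \<le> q" "q \<le> 1" using F01 pq by auto
  have key: "\<exists>j<m. D \<le> \<bar>(?T ^^ j) q - (?T ^^ j) p\<bar>"
  proof -
    have "a \<in> {x \<in> {0..1}. \<exists>j<m. (?T ^^ j) x = a}" using m1 a0 a1 by (auto intro!: exI[of _ 0])
    hence aF: "a \<in> ?F" unfolding cut_points_def by blast
    have T1: "\<bar>(?T ^^ j) 1 - a\<bar> \<ge> D" for j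
    proof (cases j)
      case 0 then show ?thesis using Da' by simp
    next
      case (Suc j') then show ?thesis using iter1[OF a0 a1] Da a0 by simp
    qed
    consider "p = 0" "q = 1" | "p = 0" "q \<noteq> 1" | "p \<noteq> 0" "q = 1" | "p \<noteq> 0" "q \<noteq> 1" by blast
    then show ?thesis
    proof cases
      case 1
      then have "a \<in> ?F \<inter> {p<..<q}" using aF a0 a1 by auto
      then show ?thesis using gapF by blast
    next
      case 2
      then obtain k where k: "k < m" "(?T ^^ k) q = a" using Fpre[OF pq(4)] pq(2) by auto
      then show ?thesis using 2 iter0[OF a0] Da by (intro exI[of _ k]) auto
    next
      case 3
      then obtain k where k: "k < m" "(?T ^^ k) p = a" using Fpre[OF pq(3)] pq(2) q01 by auto
      then show ?thesis using 3 T1[of k] by (intro exI[of _ k]) auto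
    next
      case 4
      have "p \<noteq> 1" using pq(2) q01 by auto
      then obtain kp where kp: "kp < m" "(?T ^^ kp) p = a" using Fpre[OF pq(3)] 4 by auto
      have "q \<noteq> 0" using pq(2) p01 by auto
      then obtain kq where kq: "kq < m" "(?T ^^ kq) q = a" using Fpre[OF pq(4)] 4 by auto
      consider "kp = kq" | "kp < kq" | "kq < kp" by linarith
      then show ?thesis
      proof cases
        case 1
        have "(?T ^^ kp) p = (?T ^^ kp) q" using kp kq 1 by simp
        moreover have p': "p \<in> {0..1}" "q \<in> {0..1}" using p01 q01 by auto
        ultimately obtain z i where z: "z \<in> {p<..<q}" "i < kp" "(?T ^^ i) z = a"
          using collapse[OF a0 a1 b0 b1 pq(2) p'] by blast
        hence "z \<in> {x \<in> {0..1}. \<exists>j<m. (?T ^^ j) x = a}" using kp p01 q01 by (auto intro!: exI[of _ i])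
        hence "z \<in> ?F" unfolding cut_points_def by blast
        then show ?thesis using z gapF by blast
      next
        case 2
        have "(?T ^^ kq) p = (?T ^^ (kq - kp)) a" using iter_shift[OF kp(2)] 2 by simp
        moreover have "kq - kp \<in> {1..<m}" using 2 kq by auto
        ultimately show ?thesis using Dk kq by (intro exI[of _ kq]) (auto simp: abs_minus_commute)
      next
        case 3
        have "(?T ^^ kp) q = (?T ^^ (kp - kq)) a" using iter_shift[OF kq(2)] 3 by simp
        moreover have "kp - kq \<in> {1..<m}" using 3 kp by auto
        ultimately show ?thesis using Dk kp by (intro exI[of _ kp]) auto
      qed
    qed
  qed
  then obtain j where j: "j < m" "D \<le> \<bar>(?T ^^ j) q - (?T ^^ j) p\<bar>" by blast
  have "\<bar>(?T ^^ j) q - (?T ^^ j) p\<bar> \<le> L^j * \<bar>q - p\<bar>"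
    using tent_iter_lip[OF a0 a1 _ L1 L2] b0 by simp
  also have "\<dots> = L^j * (q - p)" using pq(2) by simp
  also have "\<dots> \<le> L^m * (q - p)" using pq(2) L3 j(1)
    by (intro mult_right_mono power_increasing) auto
  finally have "D \<le> L^m * (q - p)" using j by linarith
  hence "D / L^m \<le> q - p" using L3 by (simp add: divide_simps mult.commute)
  thus ?thesis using pq by simp
qed

lemma tent_tendsto:
  fixes a b x :: "nat \<Rightarrow> real"
  assumes "\<And>n. 0 < a n" "\<And>n. a n < 1" "\<And>n. 0 \<le> b n"
    and "0 < a0" "a0 < 1" "0 \<le> b0"
    and "a \<longlonglongrightarrow> a0" "b \<longlonglongrightarrow> b0" "x \<longlonglongrightarrow> x0"
  shows "(\<lambda>n. skew_tent (a n) (b n) (x n)) \<longlonglongrightarrow> skew_tent a0 b0 x0"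
proof -
  have e: "(\<lambda>n. skew_tent (a n) (b n) (x n)) = (\<lambda>n. min (b n/a n*x n) (b n/(1-a n)*(1-x n)))"
    using tent_min assms(1-3) by auto
  have "(\<lambda>n. min (b n/a n*x n) (b n/(1-a n)*(1-x n))) \<longlonglongrightarrow> min (b0/a0*x0) (b0/(1-a0)*(1-x0))"
    using assms(4-9) by (intro tendsto_intros) auto
  thus ?thesis using e tent_min[OF assms(4-6)] by simp
qed

lemma iter_tendsto:
  fixes a b :: "nat \<Rightarrow> real"
  assumes "\<And>n. 0 < a n" "\<And>n. a n < 1" "\<And>n. 0 \<le> b n"
    and "0 < a0" "a0 < 1" "0 \<le> b0"
    and "a \<longlonglongrightarrow> a0" "b \<longlonglongrightarrow> b0"
  shows "(\<lambda>n. (skew_tent (a n) (b n) ^^ i) (a n)) \<longlonglongrightarrow> (skew_tent a0 b0 ^^ i) a0"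
proof (induction i)
  case 0 then show ?case using assms by simp
next
  case (Suc i)
  show ?case using tent_tendsto[OF assms(1-8) Suc] by simp
qed

theorem lemma3p2:
  fixes \<alpha> \<beta> :: "nat \<Rightarrow> real"
  assumes "\<And>n. (\<alpha> n, \<beta> n) \<in> U_region"
    and "kneading_in_M_infty (\<alpha> 0) (\<beta> 0)"
    and "(\<lambda>n. (\<alpha> n, \<beta> n)) \<longlonglongrightarrow> (\<alpha> 0, \<beta> 0)"
  shows "\<forall>m\<ge>1. \<exists>\<delta>>0. \<forall>n. \<forall>I\<in>refined_partition (\<alpha> n) (\<beta> n) m.
           measure lborel I \<ge> \<delta>"
proof (intro allI impI)
  fix m :: nat assume m1: "1 \<le> m"
  have h: "1/2 < \<beta> n \<and> \<beta> n \<le> 1 \<and> 1 - \<beta> n < \<alpha> n \<and> \<alpha> n < \<beta> n" for n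
    using assms(1)[of n] unfolding U_region_def by auto
  have a0: "0 < \<alpha> n" for n using h[of n] by linarith
  have a1: "\<alpha> n < 1" for n using h[of n] by linarith
  have b0: "0 < \<beta> n" for n using h[of n] by linarith
  have b1: "\<beta> n \<le> 1" for n using h[of n] by linarith
  have ta: "\<alpha> \<longlonglongrightarrow> \<alpha> 0" using tendsto_fst[OF assms(3)] by simp
  have tb: "\<beta> \<longlonglongrightarrow> \<beta> 0" using tendsto_snd[OF assms(3)] by simp
  let ?T = "\<lambda>n. skew_tent (\<alpha> n) (\<beta> n)"
  define c where "c = min (\<alpha> 0) (1 - \<alpha> 0)"
  have c0: "0 < c" and c1: "c \<le> 1/2" using a0[of 0] a1[of 0] unfolding c_def by (auto simp: min_def)
  define E where "E = insert c ((\<lambda>i. \<bar>(?T 0 ^^ i) (\<alpha> 0) - \<alpha> 0\<bar>) ` {1..<m})"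
  have finE: "finite E" unfolding E_def by simp
  have Epos: "\<forall>e\<in>E. 0 < e"
  proof
    fix e assume "e \<in> E"
    then consider "e = c" | i where "i \<in> {1..<m}" "e = \<bar>(?T 0 ^^ i) (\<alpha> 0) - \<alpha> 0\<bar>"
      unfolding E_def by auto
    then show "0 < e"
    proof cases
      case 1 then show ?thesis using c0 by simp
    next
      case 2
      have "kneading_sym (\<alpha> 0) (\<beta> 0) i \<noteq> C" using assms(2) 2(1)
        unfolding kneading_in_M_infty_def by auto
      hence "(?T 0 ^^ i) (\<alpha> 0) \<noteq> \<alpha> 0" unfolding kneading_sym_def Let_def by auto
      then show ?thesis using 2 by simp
    qed
  qed
  define D where "D = Min E / 2"
  have D0: "0 < D" unfolding D_def using finE Epos by (simp add: E_def)
  have Dc: "D \<le> c / 2" unfolding D_def using finE by (simp add: E_def)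
  have Di: "2 * D \<le> \<bar>(?T 0 ^^ i) (\<alpha> 0) - \<alpha> 0\<bar>" if "i \<in> {1..<m}" for i
  proof -
    have "\<bar>(?T 0 ^^ i) (\<alpha> 0) - \<alpha> 0\<bar> \<in> E" unfolding E_def using that by blast
    hence "Min E \<le> \<bar>(?T 0 ^^ i) (\<alpha> 0) - \<alpha> 0\<bar>" by (rule Min_le[OF finE])
    thus ?thesis unfolding D_def by simp
  qed
  define L where "L = 2 / c"
  have L1: "1 \<le> L" unfolding L_def using c0 c1 by (simp add: field_simps)
  have ev1: "eventually (\<lambda>n. \<forall>i\<in>{1..<m}. D < \<bar>(?T n ^^ i) (\<alpha> n) - \<alpha> n\<bar>) sequentially"
  proof (rule eventually_ball_finite, simp, intro ballI)
    fix i assume i: "i \<in> {1..<m}"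
    have "(\<lambda>n. \<bar>(?T n ^^ i) (\<alpha> n) - \<alpha> n\<bar>) \<longlonglongrightarrow> \<bar>(?T 0 ^^ i) (\<alpha> 0) - \<alpha> 0\<bar>"
      using iter_tendsto[OF a0 a1 less_imp_le[OF b0] a0 a1 less_imp_le[OF b0] ta tb] ta
      by (intro tendsto_intros)
    moreover have "D < \<bar>(?T 0 ^^ i) (\<alpha> 0) - \<alpha> 0\<bar>" using Di[OF i] D0 by linarith
    ultimately show "eventually (\<lambda>n. D < \<bar>(?T n ^^ i) (\<alpha> n) - \<alpha> n\<bar>) sequentially"
      by (rule order_tendstoD(1))
  qed
  have ev2: "eventually (\<lambda>n. \<alpha> 0 - c/2 < \<alpha> n) sequentially"
    using ta c0 by (intro order_tendstoD(1)) auto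
  have ev3: "eventually (\<lambda>n. \<alpha> n < \<alpha> 0 + c/2) sequentially"
    using ta c0 by (intro order_tendstoD(2)) auto
  obtain N where N: "\<And>n. n \<ge> N \<Longrightarrow> (\<forall>i\<in>{1..<m}. D < \<bar>(?T n ^^ i) (\<alpha> n) - \<alpha> n\<bar>)
      \<and> \<alpha> 0 - c/2 < \<alpha> n \<and> \<alpha> n < \<alpha> 0 + c/2"
    using eventually_conj[OF ev1 eventually_conj[OF ev2 ev3]] unfolding eventually_sequentially by blast
  have big: "D / L^m \<le> measure lborel I" if n: "n \<ge> N" and I: "I \<in> refined_partition (\<alpha> n) (\<beta> n) m" for n I
  proof -
    note Nn = N[OF n]
    have "c \<le> \<alpha> 0" "c \<le> 1 - \<alpha> 0" unfolding c_def by auto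
    hence ca: "c/2 \<le> \<alpha> n" "c/2 \<le> 1 - \<alpha> n" using Nn by linarith+
    have "\<beta> n / \<alpha> n \<le> 1 / (c/2)" using ca b1[of n] b0[of n] c0 by (intro frac_le) auto
    hence l1: "\<beta> n / \<alpha> n \<le> L" unfolding L_def by simp
    have "\<beta> n / (1 - \<alpha> n) \<le> 1 / (c/2)" using ca b1[of n] b0[of n] c0 by (intro frac_le) auto
    hence l2: "\<beta> n / (1 - \<alpha> n) \<le> L" unfolding L_def by simp
    show ?thesis
      using gap[OF a0 a1 b0 b1 l1 l2 L1 D0 _ _ _ m1 I] ca Dc Nn by force
  qed
  have "\<forall>n. \<exists>\<delta>>0. \<forall>I\<in>refined_partition (\<alpha> n) (\<beta> n) m. \<delta> \<le> measure lborel I"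
    using pos_each[OF a0 a1 b0] by blast
  then obtain g where g: "\<And>n. 0 < g n" "\<And>n I. I \<in> refined_partition (\<alpha> n) (\<beta> n) m \<Longrightarrow> g n \<le> measure lborel I"
    by metis
  define \<delta> where "\<delta> = Min (insert (D / L^m) (g ` {..<N}))"
  have "0 < \<delta>" unfolding \<delta>_def using g(1) D0 L1 by auto
  moreover have "\<forall>n. \<forall>I\<in>refined_partition (\<alpha> n) (\<beta> n) m. \<delta> \<le> measure lborel I"
  proof (intro allI ballI)
    fix n I assume I: "I \<in> refined_partition (\<alpha> n) (\<beta> n) m"
    show "\<delta> \<le> measure lborel I"
    proof (cases "n < N")
      case True
      have "\<delta> \<le> g n" unfolding \<delta>_def using True by simp
      then show ?thesis using g(2)[OF I] by linarith
    next
      case False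
      have "\<delta> \<le> D / L^m" unfolding \<delta>_def by simp
      then show ?thesis using big[OF _ I] False by force
    qed
  qed
  ultimately show "\<exists>\<delta>>0. \<forall>n. \<forall>I\<in>refined_partition (\<alpha> n) (\<beta> n) m. measure lborel I \<ge> \<delta>" by blast
qed

end
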